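(* Let $a,b,v$ be integers with $b>a\ge2$ and $v\ge2$, let $u=3$, and set $X:=ab-a-b$. Then $a,b,u,v$ satisfy (1) $a$, $b$ and $3v-1$ are pairwise coprime; (2) $\frac{1}{a}+\frac{1}{b}+\frac{v}{3v-1}>1$; (3) $vab-1=(3v-1)X$, if and only if the triple $(a,b,3v-1)$ is one of $(2,9,5)$, $(2,7,11)$. *)

theory Defs
  imports Complex_Main
begin

end

theory Submission
  imports Defs
begin

lemma cp95: "coprime (9::int) 5"
proof (rule coprimeI)
  fix c assume "c dvd (9::int)" "c dvd 5"
  hence "c dvd 9 * (-1) + 5 * 2" by (intro dvd_add dvd_mult2) auto
  thus "is_unit c" by simp
qed
lemma cp711: "coprime (7::int) 11"
proof (rule coprimeI)
  fix c assume "c dvd (7::int)" "c dvd 11"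
  hence "c dvd 7 * 3 + 11 * (-2)" by (intro dvd_add dvd_mult2) auto
  thus "is_unit c" by simp
qed

theorem lemma3p7:
  fixes a b v u X :: int
  assumes "2 \<le> a" and "a < b" and "2 \<le> v"
    and "u = 3" and "X = a * b - a - b"
  shows "(coprime a b \<and> coprime a (u * v - 1) \<and> coprime b (u * v - 1)
          \<and> 1 / real_of_int a + 1 / real_of_int b + real_of_int v / real_of_int (u * v - 1) > 1
          \<and> v * a * b - 1 = (u * v - 1) * X)
     \<longleftrightarrow> (a, b, u * v - 1) \<in> {(2, 9, 5), (2, 7, 11)}"
proof
  assume H: "coprime a b \<and> coprime a (u * v - 1) \<and> coprime b (u * v - 1)
          \<and> 1 / real_of_int a + 1 / real_of_int b + real_of_int v / real_of_int (u * v - 1) > 1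
          \<and> v * a * b - 1 = (u * v - 1) * X"
  have a2: "a = 2"
  proof (rule ccontr)
    assume "a \<noteq> 2"
    hence a3: "real_of_int a \<ge> 3" using assms by simp
    have b4: "real_of_int b \<ge> 4" using assms \<open>a \<noteq> 2\<close> by simp
    have v2: "real_of_int v \<ge> 2" using assms by simp
    have "1 / real_of_int a \<le> 1/3" using a3 by (simp add: divide_simps)
    moreover have "1 / real_of_int b \<le> 1/4" using b4 by (simp add: divide_simps)
    moreover have "real_of_int v / real_of_int (u * v - 1) \<le> 2/5"
      using v2 assms(4) by (simp add: divide_simps)
    ultimately show False using H by linarith
  qed
  have eq: "(v - 1) * (b - 6) = 3" using H a2 assms(4,5) by (simp add: algebra_simps)
  have v1: "v - 1 \<ge> 1" using assms by simp
  have bp: "b - 6 > 0"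
  proof (rule ccontr)
    assume "\<not> b - 6 > 0"
    hence "(v - 1) * (b - 6) \<le> 0" using v1 by (simp add: mult_nonneg_nonpos)
    thus False using eq by simp
  qed
  have "(v - 1) * (b - 6) \<ge> 1 * (b - 6)" using v1 bp by (intro mult_right_mono) auto
  hence "b - 6 \<le> 3" using eq by simp
  hence "b = 7 \<or> b = 8 \<or> b = 9" using bp by linarith
  moreover
  { assume "b = 8" hence "2 * (v - 1) = 3" using eq by (simp add: mult.commute)
    hence False by presburger }
  moreover
  { assume "b = 7" hence "v = 4" using eq by simp
    hence "u * v - 1 = 11" using assms(4) by simp }
  moreover
  { assume "b = 9" hence "3 * (v - 1) = 3" using eq by (simp add: mult.commute)
    hence "v = 2" by simp
    hence "u * v - 1 = 5" using assms(4) by simp }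
  ultimately show "(a, b, u * v - 1) \<in> {(2, 9, 5), (2, 7, 11)}"
    using a2 by auto
next
  assume "(a, b, u * v - 1) \<in> {(2, 9, 5), (2, 7, 11)}"
  then show "coprime a b \<and> coprime a (u * v - 1) \<and> coprime b (u * v - 1)
          \<and> 1 / real_of_int a + 1 / real_of_int b + real_of_int v / real_of_int (u * v - 1) > 1
          \<and> v * a * b - 1 = (u * v - 1) * X"
    using assms cp95 cp711 by auto
qed

end
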